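(* Let $\rho\in(0,1)$, $\lambda=\frac{1-\rho}{1+\rho}$, and let $x_i(k)$, $i\in\mathbb Z$, $k\ge0$, be real numbers with $|x_i(k)|<M$ for some $M<\infty$. Define $y_i(k)$ for all $i\in\mathbb Z$, $k\ge0$ by $y_i(0)=\lambda x_i(0)$; $y_i(1)=y_i(0)+\rho(y_{i-1}(0)+y_{i+1}(0))+\lambda(x_i(1)-x_i(0))$; $y_i(2)=y_i(1)+\rho(y_{i-1}(1)-y_{i-1}(0))+\rho(y_{i+1}(1)-y_{i+1}(0))-2\rho^2y_i(0)+\lambda(x_i(2)-x_i(1))$; and for $k\ge2$, $y_i(k+1)=y_i(k)+\rho(y_{i-1}(k)-y_{i-1}(k-1))+\rho(y_{i+1}(k)-y_{i+1}(k-1))-\rho^2(y_i(k-1)-y_i(k-2))+\lambda(x_i(k+1)-x_i(k))-\rho^2\lambda(x_i(k-1)-x_i(k-2))$. Then for all $i\in\mathbb Z$ and all $k\ge0$, $$y_i(k)=\frac{1-\rho}{1+\rho}\Big(x_i(k)+\sum_{j=1}^k\rho^j\big(x_{i-j}(k-j)+x_{i+j}(k-j)\big)\Big).$$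
   Context: Sensors indexed by $i\in\mathbb Z$ on a line; at each time $k=0,1,2,\dots$ sensor $i$ takes a (time-varying) measurement $x_i(k)$ and maintains a consensus variable $y_i(k)$; sensor $i$ may use only its own measurements and the consensus variables of sensors $i\pm1$. *)

theory Defs
  imports Complex_Main
begin

end

theory Submission
  imports Defs
begin

fun LL :: "real \<Rightarrow> (int \<Rightarrow> nat \<Rightarrow> real) \<Rightarrow> int \<Rightarrow> nat \<Rightarrow> real" where
  "LL r x i 0 = x i 0"
| "LL r x i (Suc k) = x i (Suc k) + r * LL r x (i - 1) k"

fun RR :: "real \<Rightarrow> (int \<Rightarrow> nat \<Rightarrow> real) \<Rightarrow> int \<Rightarrow> nat \<Rightarrow> real" where
  "RR r x i 0 = x i 0"
| "RR r x i (Suc k) = x i (Suc k) + r * RR r x (i + 1) k"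

lemma LL_sum: "LL r x i k = (\<Sum>j\<le>k. r^j * x (i - int j) (k - j))"
proof (induction k arbitrary: i)
  case 0 then show ?case by simp
next
  case (Suc k)
  have "(\<Sum>j\<le>Suc k. r^j * x (i - int j) (Suc k - j))
      = x i (Suc k) + (\<Sum>j\<le>k. r^Suc j * x (i - int (Suc j)) (Suc k - Suc j))"
    by (subst sum.atMost_Suc_shift) simp
  also have "(\<Sum>j\<le>k. r^Suc j * x (i - int (Suc j)) (Suc k - Suc j))
      = r * (\<Sum>j\<le>k. r^j * x (i - 1 - int j) (k - j))"
    by (simp add: sum_distrib_left algebra_simps)
  finally show ?case using Suc by simp
qed

lemma RR_sum: "RR r x i k = (\<Sum>j\<le>k. r^j * x (i + int j) (k - j))"
proof (induction k arbitrary: i)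
  case 0 then show ?case by simp
next
  case (Suc k)
  have "(\<Sum>j\<le>Suc k. r^j * x (i + int j) (Suc k - j))
      = x i (Suc k) + (\<Sum>j\<le>k. r^Suc j * x (i + int (Suc j)) (Suc k - Suc j))"
    by (subst sum.atMost_Suc_shift) simp
  also have "(\<Sum>j\<le>k. r^Suc j * x (i + int (Suc j)) (Suc k - Suc j))
      = r * (\<Sum>j\<le>k. r^j * x (i + 1 + int j) (k - j))"
    by (simp add: sum_distrib_left algebra_simps)
  finally show ?case using Suc by simp
qed

lemma split0: "(\<Sum>j\<le>(k::nat). h j) = h 0 + (\<Sum>j=1..k. (h j::real))"
proof -
  have "{..k} = insert 0 {1..k}" by auto
  then show ?thesis by simp
qed

lemma F_eq: "x i k + (\<Sum>j = 1..k. r^j * (x (i - int j) (k - j) + x (i + int j) (k - j)))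
   = LL r x i k + RR r x i k - x i k"
  by (simp add: LL_sum RR_sum split0[of _ k] distrib_left sum.distrib)

lemma key: "r * ((LL r x (i-1) (Suc k) + RR r x (i-1) (Suc k) - x (i-1) (Suc k))
               + (LL r x (i+1) (Suc k) + RR r x (i+1) (Suc k) - x (i+1) (Suc k)))
   = (LL r x i (Suc (Suc k)) + RR r x i (Suc (Suc k)) - x i (Suc (Suc k))) - x i (Suc (Suc k))
     + r^2 * (LL r x i k + RR r x i k - x i k) + r^2 * x i k"
  by (simp add: algebra_simps power2_eq_square)

theorem theorem4:
  fixes rho lam M :: real and x y :: "int \<Rightarrow> nat \<Rightarrow> real"
  assumes rho_pos: "0 < rho" "rho < 1"
    and lam_def: "lam = (1 - rho) / (1 + rho)"
    and bnd: "\<And>i k. \<bar>x i k\<bar> < M"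
    and y0: "\<And>i. y i 0 = lam * x i 0"
    and y1: "\<And>i. y i 1 = y i 0 + rho * (y (i - 1) 0 + y (i + 1) 0) + lam * (x i 1 - x i 0)"
    and y2: "\<And>i. y i 2 = y i 1 + rho * (y (i - 1) 1 - y (i - 1) 0) + rho * (y (i + 1) 1 - y (i + 1) 0)
                 - 2 * rho^2 * y i 0 + lam * (x i 2 - x i 1)"
    and yrec: "\<And>i k. k \<ge> 2 \<Longrightarrow>
      y i (k + 1) = y i k + rho * (y (i - 1) k - y (i - 1) (k - 1)) + rho * (y (i + 1) k - y (i + 1) (k - 1))
        - rho^2 * (y i (k - 1) - y i (k - 2)) + lam * (x i (k + 1) - x i k)
        - rho^2 * lam * (x i (k - 1) - x i (k - 2))"
  shows "\<forall>i k. y i k = (1 - rho) / (1 + rho) *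
      (x i k + (\<Sum>j = 1..k. rho^j * (x (i - int j) (k - j) + x (i + int j) (k - j))))"
proof -
  define F where "F i k = LL rho x i k + RR rho x i k - x i k" for i k
  have kF: "rho * (F (i-1) (Suc k) + F (i+1) (Suc k))
     = F i (Suc (Suc k)) - x i (Suc (Suc k)) + rho^2 * F i k + rho^2 * x i k" for i k
    unfolding F_def by (rule key)
  have F0: "F i 0 = x i 0" for i by (simp add: F_def)
  have F1: "F i 1 = x i 1 + rho * (x (i-1) 0 + x (i+1) 0)" for i
    by (simp add: F_def algebra_simps)
  have F2: "rho * (F (i-1) 1 + F (i+1) 1) = F i 2 - x i 2 + rho^2 * F i 0 + rho^2 * x i 0" for i
    using kF[of i 0] by (simp add: numeral_2_eq_2)
  have main: "y i k = lam * F i k" for i k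
  proof (induction k arbitrary: i rule: less_induct)
    case (less k)
    consider "k = 0" | "k = 1" | "k = 2" | m where "k = Suc (Suc (Suc m))"
      by (metis One_nat_def Suc_1 not0_implies_Suc)
    then show ?case
    proof cases
      case 1 then show ?thesis using y0 F0 by simp
    next
      case 2 then show ?thesis using y1 y0 F1 F0 by (simp add: algebra_simps)
    next
      case 3
      have a: "y j 1 = lam * F j 1" "y j 0 = lam * F j 0" for j
        using less[of 1] less[of 0] 3 by auto
      have "y i 2 = lam * (F i 1 + rho * (F (i-1) 1 + F (i+1) 1) - rho * (F (i-1) 0 + F (i+1) 0)
            - 2 * rho^2 * F i 0 + (x i 2 - x i 1))"
        using y2[of i] a by (simp add: algebra_simps)
      also have "\<dots> = lam * F i 2"
        using F2[of i] F0 F1 by (simp add: algebra_simps power2_eq_square)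
      finally show ?thesis using 3 by simp
    next
      case 4
      have a: "y j (Suc (Suc m)) = lam * F j (Suc (Suc m))" "y j (Suc m) = lam * F j (Suc m)"
           "y j m = lam * F j m" for j
        using less 4 by auto
      have r: "y i (Suc (Suc (Suc m))) = y i (Suc (Suc m))
        + rho * (y (i - 1) (Suc (Suc m)) - y (i - 1) (Suc m)) + rho * (y (i + 1) (Suc (Suc m)) - y (i + 1) (Suc m))
        - rho^2 * (y i (Suc m) - y i m) + lam * (x i (Suc (Suc (Suc m))) - x i (Suc (Suc m)))
        - rho^2 * lam * (x i (Suc m) - x i m)"
        using yrec[of "Suc (Suc m)" i] by simp
      have e1: "rho * (F (i-1) (Suc (Suc m)) + F (i+1) (Suc (Suc m)))
         = F i (Suc (Suc (Suc m))) - x i (Suc (Suc (Suc m))) + rho^2 * F i (Suc m) + rho^2 * x i (Suc m)"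
        by (rule kF)
      have e2: "rho * (F (i-1) (Suc m) + F (i+1) (Suc m))
         = F i (Suc (Suc m)) - x i (Suc (Suc m)) + rho^2 * F i m + rho^2 * x i m"
        by (rule kF)
      have "y i (Suc (Suc (Suc m))) = lam * (F i (Suc (Suc m))
        + rho * (F (i-1) (Suc (Suc m)) + F (i+1) (Suc (Suc m)))
        - rho * (F (i-1) (Suc m) + F (i+1) (Suc m))
        - rho^2 * (F i (Suc m) - F i m) + (x i (Suc (Suc (Suc m))) - x i (Suc (Suc m)))
        - rho^2 * (x i (Suc m) - x i m))"
        using r a by (simp add: algebra_simps)
      also have "\<dots> = lam * F i (Suc (Suc (Suc m)))"
        unfolding e1 e2 by (simp add: algebra_simps)
      finally show ?thesis using 4 by simp
    qed
  qed
  show ?thesis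
  proof (intro allI)
    fix i k
    show "y i k = (1 - rho) / (1 + rho) *
      (x i k + (\<Sum>j = 1..k. rho^j * (x (i - int j) (k - j) + x (i + int j) (k - j))))"
      unfolding F_eq using main[of i k] by (simp add: F_def lam_def)
  qed
qed

end
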